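(* For any numbers $\Lambda\geq1$ and $d>0$ there exists a constant $C$ such that the following holds for any $\bar x\in S^2$ and any $\bar r\in(0,\pi/2]$. Let $\rho_{\bar x,\bar r}$ be the conformal factor of the Möbius transform corresponding to a dilation at $\bar x$ that maps $B_{\bar r}(\bar x)$ onto a hemisphere. Then for any $x\in B_{\Lambda\bar r}(\bar x)$ and any $r\in(d\bar r,\bar r)$, \[ \|d\varphi_{x,r}\|_{L^\infty(S^2,\rho_{\bar x,\bar r}^2g_{S^2})}\leq C. \]
   Context: $S^2\subset\mathbb{R}^3$ is the unit sphere with round metric $g_{S^2}$ and $B_r(x)$ denotes a geodesic ball. $(\varphi_{x,r})_{x\in S^2,\,r\in(0,\pi/2]}$ is a fixed family of cut-off functions with $\varphi_{x,r}\in C^\infty_0(B_r(x),[0,1])$, $\varphi_{x,r}\equiv1$ on $B_{r/2}(x)$ and $\|d\varphi_{x,r}\|_{L^\infty(S^2,g_{S^2})}\leq C_*r^{-1}$ for a universal constant $C_*$. The conformal factor of a Möbius transform $M$ is $\rho_M=\frac1{\sqrt2}|\nabla M|$, so that $M^*g_{S^2}=\rho_M^2g_{S^2}$; for $\bar r=\pi/2$ the dilation is the identity and $\rho=1$. *)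

theory Defs
  imports "HOL-Analysis.Analysis"
begin

type_synonym R3 = "real^3"

definition S2 :: "R3 set" where
  "S2 = {y. norm y = 1}"

definition gdist :: "R3 \<Rightarrow> R3 \<Rightarrow> real" where
  "gdist x y = arccos (x \<bullet> y)"

definition gball :: "R3 \<Rightarrow> real \<Rightarrow> R3 set" where
  "gball x r = {y \<in> S2. gdist x y < r}"

text \<open>A function on S2 is represented by a function on R3; only its values on S2 matter,
  since we always compose with the radial projection z / |z| onto S2.\<close>
definition radial :: "(R3 \<Rightarrow> 'b) \<Rightarrow> R3 \<Rightarrow> 'b" where
  "radial f z = f (z /\<^sub>R norm z)"

definition pderiv3 :: "3 \<Rightarrow> (R3 \<Rightarrow> real) \<Rightarrow> R3 \<Rightarrow> real" where
  "pderiv3 i f z = frechet_derivative f (at z) (axis i 1)"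

definition smooth_on3 :: "R3 set \<Rightarrow> (R3 \<Rightarrow> real) \<Rightarrow> bool" where
  "smooth_on3 U f \<longleftrightarrow> (\<forall>is. (fold pderiv3 is f) differentiable_on U)"

definition smooth_S2 :: "(R3 \<Rightarrow> real) \<Rightarrow> bool" where
  "smooth_S2 f \<longleftrightarrow> smooth_on3 (- {0}) (radial f)"

text \<open>Pointwise norm of the differential df(y) with respect to the round metric g_S2:
  the operator norm of the differential restricted to the tangent space T_y S2
  (the derivative of the radial extension at y is df(y) composed with the tangential projection).\<close>
definition dnorm :: "(R3 \<Rightarrow> real) \<Rightarrow> R3 \<Rightarrow> real" where
  "dnorm f y = onorm (frechet_derivative (radial f) (at y))"

text \<open>Pointwise norm of the covector df(y) w.r.t. the conformal metric rho^2 g_S2.\<close>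
definition dnorm_conf :: "(R3 \<Rightarrow> real) \<Rightarrow> (R3 \<Rightarrow> real) \<Rightarrow> R3 \<Rightarrow> real" where
  "dnorm_conf rho f y = dnorm f y / rho y"

text \<open>Stereographic projection of S2 from the antipode -xb onto the plane orthogonal to xb
  (through the origin), and its inverse.\<close>
definition stereo :: "R3 \<Rightarrow> R3 \<Rightarrow> R3" where
  "stereo xb y = (1 / (1 + y \<bullet> xb)) *\<^sub>R (y - (y \<bullet> xb) *\<^sub>R xb)"

definition stereo_inv :: "R3 \<Rightarrow> R3 \<Rightarrow> R3" where
  "stereo_inv xb w = (1 / (1 + (norm w)\<^sup>2)) *\<^sub>R (2 *\<^sub>R w + (1 - (norm w)\<^sup>2) *\<^sub>R xb)"

text \<open>The Moebius transform given by the dilation at xb by factor 1/tan(rb/2): it maps the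
  geodesic ball B_rb(xb) onto the hemisphere centred at xb (and is the identity for rb = pi/2).\<close>
definition mobius_dil :: "R3 \<Rightarrow> real \<Rightarrow> R3 \<Rightarrow> R3" where
  "mobius_dil xb rb y =
     (if y = - xb then - xb else stereo_inv xb ((1 / tan (rb / 2)) *\<^sub>R stereo xb y))"

text \<open>Conformal factor rho_M = |nabla M| / sqrt 2 of a map M : S2 -> S2, where |nabla M|(y) is the
  Hilbert-Schmidt norm of dM(y) on T_y S2 (computed via the radial extension).\<close>
definition conf_factor :: "(R3 \<Rightarrow> R3) \<Rightarrow> R3 \<Rightarrow> real" where
  "conf_factor M y =
     (1 / sqrt 2) * sqrt (\<Sum>i\<in>Basis. (norm (frechet_derivative (radial M) (at y) i))\<^sup>2)"

definition rho_dil :: "R3 \<Rightarrow> real \<Rightarrow> R3 \<Rightarrow> real" where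
  "rho_dil xb rb = conf_factor (mobius_dil xb rb)"

definition cutoff_family :: "(R3 \<Rightarrow> real \<Rightarrow> R3 \<Rightarrow> real) \<Rightarrow> real \<Rightarrow> bool" where
  "cutoff_family phi Cs \<longleftrightarrow>
     (\<forall>x\<in>S2. \<forall>r\<in>{0<..pi/2}.
        smooth_S2 (phi x r)
      \<and> closure {y\<in>S2. phi x r y \<noteq> 0} \<subseteq> gball x r
      \<and> (\<forall>y\<in>S2. 0 \<le> phi x r y \<and> phi x r y \<le> 1)
      \<and> (\<forall>y\<in>gball x (r/2). phi x r y = 1)
      \<and> (\<forall>y\<in>S2. dnorm (phi x r) y \<le> Cs / r))"

end

theory Submission
  imports Defs "HOL-Analysis.Analysis"
begin


definition Dn :: "R3 \<Rightarrow> real \<Rightarrow> R3 \<Rightarrow> real" where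
  "Dn xb lam z = (1 + z \<bullet> xb) + lam\<^sup>2 * (1 - z \<bullet> xb)"
definition Gf :: "R3 \<Rightarrow> real \<Rightarrow> R3 \<Rightarrow> R3" where
  "Gf xb lam z = (1 / Dn xb lam z) *\<^sub>R ((2*lam) *\<^sub>R (z - (z \<bullet> xb) *\<^sub>R xb)
      + ((1 + z \<bullet> xb) - lam\<^sup>2 * (1 - z \<bullet> xb)) *\<^sub>R xb)"

lemma inner_le1: assumes "norm (x::R3) = 1" "norm y = 1" shows "\<bar>x \<bullet> y\<bar> \<le> 1"
  using Cauchy_Schwarz_ineq2[of x y] assms by simp

lemma inner_eq_m1: assumes "norm (x::R3) = 1" "norm y = 1" "y \<bullet> x = -1" shows "y = - x"
proof -
  have xx: "x \<bullet> x = 1" "y \<bullet> y = 1" using assms(1,2) by (simp_all add: dot_square_norm)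
  have "norm (y + x)^2 = 0" using assms xx by (simp add: power2_norm_eq_inner algebra_simps inner_commute)
  then show ?thesis by (simp add: add_eq_0_iff2)
qed

lemma mob_eq:
  assumes xb: "norm xb = 1" and y: "norm y = 1" and lam: "lam \<noteq> 0"
  shows "(if y = - xb then - xb else stereo_inv xb (lam *\<^sub>R stereo xb y)) = Gf xb lam y"
proof (cases "y = - xb")
  case True
  then show ?thesis using xb lam by (simp add: Gf_def Dn_def dot_square_norm)
next
  case False
  define s where "s = y \<bullet> xb"
  define v where "v = y - s *\<^sub>R xb"
  have s1: "\<bar>s\<bar> \<le> 1" using inner_le1[OF y xb] s_def by simp
  have sne: "s \<noteq> -1" using inner_eq_m1[OF xb y] False s_def by auto
  have sp: "1 + s > 0" using s1 sne by auto
  have vx: "v \<bullet> xb = 0" using xb by (simp add: v_def s_def inner_diff_left dot_square_norm)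
  have nv: "(norm v)^2 = 1 - s^2"
  proof -
    have "y = v + s *\<^sub>R xb" by (simp add: v_def)
    have xx: "xb \<bullet> xb = 1" using xb by (simp add: dot_square_norm)
    have "(norm y)^2 = y \<bullet> y" by (simp add: dot_square_norm)
    also have "\<dots> = v \<bullet> v + s^2" unfolding \<open>y = v + s *\<^sub>R xb\<close> using vx xx
      by (simp add: inner_add_left inner_add_right inner_commute power2_eq_square)
    finally have "(norm y)^2 = (norm v)^2 + s^2" by (simp add: dot_square_norm)
    thus ?thesis using y by simp
  qed
  define q where "q = lam^2 * (1 - s) / (1 + s)"
  have nq: "(norm (lam *\<^sub>R ((1 / (1 + s)) *\<^sub>R v)))^2 = q"
  proof -
    have "(norm (lam *\<^sub>R ((1 / (1 + s)) *\<^sub>R v)))^2 = lam^2 * (norm v)^2 / (1+s)^2"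
      using sp by (simp add: power_mult_distrib power_divide)
    also have "\<dots> = lam^2 * ((1 - s) * (1 + s)) / ((1+s) * (1+s))" unfolding nv
      by (simp add: power2_eq_square algebra_simps)
    also have "\<dots> = q" using sp by (simp add: q_def)
    finally show ?thesis .
  qed
  have st: "stereo xb y = (1 / (1 + s)) *\<^sub>R v" by (simp add: stereo_def s_def v_def)
  have D: "Dn xb lam y = (1 + s) * (1 + q)" using sp by (simp add: Dn_def q_def s_def field_simps)
  have "stereo_inv xb (lam *\<^sub>R stereo xb y) =
      (1 / (1 + q)) *\<^sub>R (2 *\<^sub>R (lam *\<^sub>R ((1 / (1 + s)) *\<^sub>R v)) + (1 - q) *\<^sub>R xb)"
    unfolding stereo_inv_def st nq ..
  also have "\<dots> = (1 / Dn xb lam y) *\<^sub>R ((2*lam) *\<^sub>R v + ((1 + s) - lam\<^sup>2 * (1 - s)) *\<^sub>R xb)"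
    using sp unfolding D
    apply (simp add: scaleR_add_right q_def)
    apply (simp add: field_simps)
    done
  finally show ?thesis using False by (simp add: Gf_def s_def v_def)
qed

lemma deriv_eval_rule:
  "(f has_derivative F) (at p) \<Longrightarrow> (f has_derivative G) (at p) \<Longrightarrow> G e = X \<Longrightarrow> F e = X"
  using has_derivative_unique by metis

lemma Gn_deriv:
  fixes xb p e :: R3
  assumes F: "((\<lambda>z. Gf xb lam (inverse (norm z) *\<^sub>R z)) has_derivative F) (at p)"
    and p: "norm p = 1" and ex: "e \<bullet> xb = 0" and ep: "e \<bullet> p = 0" and D: "Dn xb lam p \<noteq> 0"
  shows "F e = (2 * lam / Dn xb lam p) *\<^sub>R e"
proof -
  have p0: "p \<noteq> 0" "norm p \<noteq> 0" using p by auto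
  note hn = has_derivative_norm[OF p0(1)]
  have D': "1 + (p /\<^sub>R norm p) \<bullet> xb + lam\<^sup>2 * (1 - (p /\<^sub>R norm p) \<bullet> xb) \<noteq> 0"
    using D p by (simp add: Dn_def)
  show ?thesis
  apply (rule deriv_eval_rule[OF F])
  unfolding Gf_def Dn_def
  apply (rule derivative_eq_intros refl hn p0 D')+
  using p ex ep by (simp add: sgn_div_norm inner_add_left inner_diff_left inner_commute divide_inverse)
qed
lemma hs_lower:
  fixes F :: "R3 \<Rightarrow> R3"
  assumes "linear F" "norm e = 1"
  shows "(norm (F e))^2 \<le> (\<Sum>i\<in>Basis. (norm (F i))^2)"
proof -
  have "F e = F (\<Sum>i\<in>Basis. (e \<bullet> i) *\<^sub>R i)" by (simp add: euclidean_representation)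
  also have "\<dots> = (\<Sum>i\<in>Basis. (e \<bullet> i) *\<^sub>R F i)"
    using assms(1) by (simp add: linear_sum linear_cmul)
  finally have eq: "F e = (\<Sum>i\<in>Basis. (e \<bullet> i) *\<^sub>R F i)" .
  have "norm (F e) \<le> (\<Sum>i\<in>Basis. norm ((e \<bullet> i) *\<^sub>R F i))"
    unfolding eq by (rule norm_sum)
  also have "\<dots> = (\<Sum>i\<in>Basis. \<bar>e \<bullet> i\<bar> * \<bar>norm (F i)\<bar>)" by simp
  also have "\<dots> \<le> L2_set (\<lambda>i. e \<bullet> i) Basis * L2_set (\<lambda>i. norm (F i)) Basis"
    by (rule L2_set_mult_ineq)
  also have "L2_set (\<lambda>i. e \<bullet> i) Basis = 1"
  proof -
    have h: "(\<Sum>i\<in>Basis. (e \<bullet> i)^2) = e \<bullet> e"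
      unfolding power2_eq_square by (rule euclidean_inner[symmetric])
    have "e \<bullet> e = 1" using assms(2) by (simp add: dot_square_norm)
    thus ?thesis unfolding L2_set_def h by simp
  qed
  finally have "norm (F e) \<le> L2_set (\<lambda>i. norm (F i)) Basis" by simp
  hence "(norm (F e))^2 \<le> (L2_set (\<lambda>i. norm (F i)) Basis)^2"
    by (simp add: power_mono)
  moreover have "0 \<le> (\<Sum>i\<in>Basis. (norm (F i))^2)" by (rule sum_nonneg) simp
  ultimately show ?thesis by (simp add: L2_set_def)
qed

lemma orth_unit:
  fixes a b :: R3
  obtains e where "norm e = 1" "e \<bullet> a = 0" "e \<bullet> b = 0"
proof -
  have "dim {a, b} \<le> card {a, b}" by (rule dim_le_card) (auto intro: span_base)
  also have "\<dots> \<le> 2" by (simp add: card_insert_le_m1)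
  finally have "dim {a, b} < DIM(R3)" by simp
  then obtain x where x: "x \<noteq> 0" "\<And>y. y \<in> span {a, b} \<Longrightarrow> orthogonal x y"
    using orthogonal_to_subspace_exists[OF \<open>dim {a, b} < DIM(R3)\<close>] by blast
  have "orthogonal x a" "orthogonal x b" using x(2) by (auto intro: span_base)
  then show ?thesis using x(1)
  proof (intro that[of "x /\<^sub>R norm x"])
    show "norm (x /\<^sub>R norm x) = 1" using x(1) by simp
    show "(x /\<^sub>R norm x) \<bullet> a = 0" using \<open>orthogonal x a\<close> by (simp add: orthogonal_def)
    show "(x /\<^sub>R norm x) \<bullet> b = 0" using \<open>orthogonal x b\<close> by (simp add: orthogonal_def)
  qed
qed

lemma Dn_pos:
  assumes "norm xb = 1" "norm y = 1" "lam > 0"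
  shows "Dn xb lam y > 0"
proof -
  have s: "\<bar>y \<bullet> xb\<bar> \<le> 1" using inner_le1[OF assms(2,1)] .
  show ?thesis
  proof (cases "y \<bullet> xb = -1")
    case True then show ?thesis using assms by (simp add: Dn_def)
  next
    case False
    then have "1 + y \<bullet> xb > 0" using s by auto
    moreover have "lam\<^sup>2 * (1 - y \<bullet> xb) \<ge> 0" using s by auto
    ultimately show ?thesis by (simp add: Dn_def)
  qed
qed

lemma rho_lower:
  assumes xb: "xb \<in> S2" and y: "y \<in> S2" and lam: "lam = 1 / tan (rb/2)" "lam > 0"
  shows "rho_dil xb rb y \<ge> sqrt 2 * lam / Dn xb lam y"
proof -
  have nxb: "norm xb = 1" and ny: "norm y = 1" using xb y by (auto simp: S2_def)
  have Dp: "Dn xb lam y > 0" using Dn_pos[OF nxb ny lam(2)] .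
  have eq: "radial (mobius_dil xb rb) z = Gf xb lam (z /\<^sub>R norm z)" if "z \<in> - {0}" for z
  proof -
    have "norm (z /\<^sub>R norm z) = 1" using that by simp
    then show ?thesis unfolding radial_def mobius_dil_def lam(1)[symmetric]
      by (rule mob_eq[OF nxb]) (use lam(2) in simp)
  qed
  have p0: "y \<noteq> 0" "norm y \<noteq> 0" using ny by auto
  note hn = has_derivative_norm[OF p0(1)]
  have D': "1 + (y /\<^sub>R norm y) \<bullet> xb + lam\<^sup>2 * (1 - (y /\<^sub>R norm y) \<bullet> xb) \<noteq> 0"
    using Dp ny by (simp add: Dn_def)
  have "\<exists>F. ((\<lambda>z. Gf xb lam (z /\<^sub>R norm z)) has_derivative F) (at y)"
    apply (rule exI)
    unfolding Gf_def Dn_def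
    apply (rule derivative_eq_intros refl hn p0 D')+
    done
  then obtain F where F: "((\<lambda>z. Gf xb lam (z /\<^sub>R norm z)) has_derivative F) (at y)" by blast
  have F2: "(radial (mobius_dil xb rb) has_derivative F) (at y)"
    apply (rule has_derivative_transform_within_open[OF F, of "- {0}"])
      apply (simp add: open_Compl)
     apply (simp add: p0)
    apply (simp add: eq)
    done
  have fd: "frechet_derivative (radial (mobius_dil xb rb)) (at y) = F"
    by (rule frechet_derivative_at[OF F2, symmetric])
  have lin: "linear F" by (rule has_derivative_linear[OF F2])
  obtain e where e: "norm e = 1" "e \<bullet> xb = 0" "e \<bullet> y = 0" using orth_unit by blast
  have Fe: "F e = (2 * lam / Dn xb lam y) *\<^sub>R e"
    using Gn_deriv[OF F ny e(2) e(3)] Dp by simp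
  have nFe: "norm (F e) = 2 * lam / Dn xb lam y" using Fe e(1) Dp lam(2) by simp
  have "norm (F e) \<le> sqrt (\<Sum>i\<in>Basis. (norm (F i))\<^sup>2)"
    by (rule real_le_rsqrt[OF hs_lower[OF lin e(1)]])
  then have "(1 / sqrt 2) * (2 * lam / Dn xb lam y) \<le> rho_dil xb rb y"
    unfolding rho_dil_def conf_factor_def fd nFe[symmetric]
    by (rule mult_left_mono) auto
  moreover have "(1 / sqrt 2) * (2 * lam / Dn xb lam y) = sqrt 2 * lam / Dn xb lam y"
  proof -
    have s2: "2 / sqrt 2 = sqrt 2" by (simp add: real_div_sqrt)
    have "(1 / sqrt 2) * (2 * lam / Dn xb lam y) = (2 / sqrt 2) * lam / Dn xb lam y" by simp
    then show ?thesis unfolding s2 .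
  qed
  ultimately show ?thesis by linarith
qed

lemma one_minus_cos: "1 - cos (t::real) \<le> t\<^sup>2 / 2"
proof -
  have c: "cos t = 1 - 2 * sin (t/2) ^ 2" using cos_double_sin[of "t/2"] by simp
  have "\<bar>sin (t/2)\<bar> \<le> \<bar>t/2\<bar>" by (rule abs_sin_x_le_abs_x)
  then have "sin (t/2) ^ 2 \<le> (t/2)^2" by (simp only: abs_le_square_iff)
  then show ?thesis unfolding c by (simp add: power_divide)
qed

lemma chord_le_arc:
  assumes "x \<in> S2" "y \<in> S2"
  shows "norm (x - y) \<le> gdist x y"
proof -
  have nx: "norm x = 1" and ny: "norm y = 1" using assms by (auto simp: S2_def)
  define c where "c = x \<bullet> y"
  have c1: "-1 \<le> c" "c \<le> 1" using inner_le1[OF nx ny] c_def by auto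
  define th where "th = arccos c"
  have th0: "0 \<le> th" using c1 by (simp add: th_def arccos_lbound)
  have cth: "cos th = c" using c1 by (simp add: th_def)
  have xx: "x \<bullet> x = 1" "y \<bullet> y = 1" using nx ny by (simp_all add: dot_square_norm)
  have "(norm (x - y))^2 = 2 - 2 * c"
    by (simp add: power2_norm_eq_inner inner_diff_left inner_diff_right xx c_def inner_commute)
  also have "\<dots> = 2 * (1 - cos th)" by (simp add: cth)
  also have "\<dots> \<le> th^2" using one_minus_cos[of th] by simp
  finally have "(norm (x - y))^2 \<le> th^2" .
  then have "norm (x - y) \<le> th" using th0 by (simp add: abs_le_square_iff[symmetric])
  then show ?thesis by (simp add: gdist_def th_def c_def)
qed

lemma tan_bounds:
  assumes "0 < rb" "rb \<le> pi/2"
  shows "0 < tan (rb/2)" "rb/2 \<le> tan (rb/2)" "tan (rb/2) \<le> rb"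
proof -
  have t: "0 < rb/2" "rb/2 < pi/2" using assms pi_gt3 by auto
  show "0 < tan (rb/2)" using t by (simp add: tan_gt_zero)
  have "arctan (tan (rb/2)) = rb/2" using t by (intro arctan_tan) auto
  then show "rb/2 \<le> tan (rb/2)"
    using arctan_le_self[of "tan (rb/2)"] \<open>0 < tan (rb/2)\<close> by simp
  have s: "sin (rb/2) \<le> rb/2" using t by (intro sin_x_le_x) simp
  have "1 - cos (rb/2) \<le> (rb/2)^2/2" by (rule one_minus_cos)
  moreover have "(rb/2)^2 \<le> (pi/4)^2" using t assms by (intro power_mono) auto
  moreover have "(pi/4)^2 < 1"
  proof -
    have "pi/4 < 1" "0 \<le> pi/4" using pi_less_4 pi_gt3 by auto
    then show ?thesis using power_strict_mono[of "pi/4" 1 2] by simp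
  qed
  ultimately have c: "cos (rb/2) > 1/2" by simp
  have "tan (rb/2) = sin (rb/2) / cos (rb/2)" by (simp add: tan_def)
  also have "\<dots> \<le> (rb/2) / (1/2)"
    using s c t sin_gt_zero[of "rb/2"] by (intro frac_le) auto
  finally show "tan (rb/2) \<le> rb" by simp
qed

lemma dnorm_zero:
  assumes y: "y \<in> S2" and ny: "y \<notin> closure {z \<in> S2. f z \<noteq> 0}"
  shows "dnorm f y = 0"
proof -
  have ny1: "norm y = 1" using y by (simp add: S2_def)
  obtain e where e: "e > 0" and he: "\<And>z. z \<in> S2 \<Longrightarrow> f z \<noteq> 0 \<Longrightarrow> dist z y \<ge> e"
  proof -
    from ny obtain e where "e > 0" "\<forall>z\<in>{z \<in> S2. f z \<noteq> 0}. \<not> dist z y < e"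
      unfolding closure_approachable by blast
    then show ?thesis using that by (simp add: not_less)
  qed
  define \<delta> where "\<delta> = min (e/2) (1/2)"
  have dp: "\<delta> > 0" using e by (simp add: \<delta>_def)
  have z0: "radial f w = 0" if w: "w \<in> ball y \<delta>" for w
  proof -
    have dwy: "norm (w - y) < \<delta>" using w by (simp add: dist_norm norm_minus_commute)
    have "\<bar>norm w - norm y\<bar> \<le> norm (w - y)" by (rule norm_triangle_ineq3)
    then have nw: "\<bar>norm w - 1\<bar> < \<delta>" using dwy ny1 by simp
    then have wpos: "norm w > 0" using \<delta>_def by auto
    have "w /\<^sub>R norm w - w = (1 / norm w - 1) *\<^sub>R w" by (simp add: scaleR_diff_left inverse_eq_divide)
    then have "norm (w /\<^sub>R norm w - w) = \<bar>1 / norm w - 1\<bar> * norm w" by simp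
    also have "\<dots> = \<bar>(1 / norm w - 1) * norm w\<bar>" by (simp add: abs_mult)
    also have "(1 / norm w - 1) * norm w = 1 - norm w" using wpos by (simp add: field_simps)
    finally have n1: "norm (w /\<^sub>R norm w - w) < \<delta>" using nw by linarith
    have "dist (w /\<^sub>R norm w) y \<le> norm (w /\<^sub>R norm w - w) + norm (w - y)"
      using dist_triangle[of "w /\<^sub>R norm w" y w] by (simp add: dist_norm)
    also have "\<dots> < e" using n1 dwy \<delta>_def by auto
    finally have "dist (w /\<^sub>R norm w) y < e" .
    moreover have "w /\<^sub>R norm w \<in> S2" using wpos by (simp add: S2_def)
    ultimately have "f (w /\<^sub>R norm w) = 0" using he[of "w /\<^sub>R norm w"] by linarith
    then show ?thesis by (simp add: radial_def)
  qed
  have "((\<lambda>w. 0::real) has_derivative (\<lambda>h. 0)) (at y)" by simp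
  then have "(radial f has_derivative (\<lambda>h. 0)) (at y)"
    by (rule has_derivative_transform_within_open[of _ _ y UNIV "ball y \<delta>"])
       (use dp z0 in auto)
  then have "frechet_derivative (radial f) (at y) = (\<lambda>h. 0)"
    by (rule frechet_derivative_at[symmetric])
  then show ?thesis by (simp add: dnorm_def onorm_zero)
qed

lemma main_bound:
  fixes phi :: "R3 \<Rightarrow> real \<Rightarrow> R3 \<Rightarrow> real" and Cs :: real
  assumes cf: "cutoff_family phi Cs" and L: "\<Lambda> \<ge> 1" and d: "d > 0"
    and xb: "xb \<in> S2" and rb: "rb \<in> {0<..pi/2}" and x: "x \<in> gball xb (\<Lambda> * rb)"
    and r: "r \<in> {d * rb<..<rb}" and y: "y \<in> S2"
  shows "dnorm_conf (rho_dil xb rb) (phi x r) y \<le> \<bar>Cs\<bar> * (2 + 2 * (\<Lambda> + 1)\<^sup>2) / d"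
proof -
  define K where "K = 2 + 2 * (\<Lambda> + 1)\<^sup>2"
  have K0: "K > 0" by (simp add: K_def add_pos_nonneg)
  have rb0: "0 < rb" "rb \<le> pi/2" using rb by auto
  have "0 < d * rb" using d rb0 by simp
  then have r0: "0 < r" "r < rb" "d * rb < r" using r by auto
  have xS: "x \<in> S2" using x by (simp add: gball_def)
  have rr: "r \<in> {0<..pi/2}" using r0 rb0 by auto
  have cfx: "closure {z\<in>S2. phi x r z \<noteq> 0} \<subseteq> gball x r" "dnorm (phi x r) y \<le> Cs / r"
    using cf xS rr y unfolding cutoff_family_def by blast+
  define a where "a = dnorm (phi x r) y"
  define tb where "tb = tan (rb/2)"
  define lam where "lam = 1 / tb"
  have tb: "0 < tb" "rb/2 \<le> tb" "tb \<le> rb" using tan_bounds[OF rb0] by (auto simp: tb_def)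
  have lam0: "lam > 0" using tb by (simp add: lam_def)
  have rho: "rho_dil xb rb y \<ge> sqrt 2 * lam / Dn xb lam y"
    by (rule rho_lower[OF xb y _ lam0]) (simp add: lam_def tb_def)
  have nxb: "norm xb = 1" and ny: "norm y = 1" using xb y by (auto simp: S2_def)
  have Dp: "Dn xb lam y > 0" by (rule Dn_pos[OF nxb ny lam0])
  have rho0: "rho_dil xb rb y \<ge> 0"
    unfolding rho_dil_def conf_factor_def
    by (intro mult_nonneg_nonneg real_sqrt_ge_zero sum_nonneg) auto
  have C0: "\<bar>Cs\<bar> * K / d \<ge> 0" using K0 d by simp
  show ?thesis
  proof (cases "a \<le> 0")
    case True
    then have "a / rho_dil xb rb y \<le> 0" using rho0 by (simp add: divide_nonpos_nonneg)
    then show ?thesis using C0 by (simp add: dnorm_conf_def a_def K_def)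
  next
    case False
    then have "dnorm (phi x r) y \<noteq> 0" by (simp add: a_def)
    then have "y \<in> closure {z\<in>S2. phi x r z \<noteq> 0}" using dnorm_zero[OF y] by blast
    then have "y \<in> gball x r" using cfx by blast
    then have gy: "gdist x y < r" by (simp add: gball_def)
    have gx: "gdist xb x < \<Lambda> * rb" using x by (simp add: gball_def)
    have "norm (xb - y) \<le> norm (xb - x) + norm (x - y)" using dist_triangle[of xb y x] by (simp add: dist_norm)
    also have "\<dots> < \<Lambda> * rb + rb"
      using chord_le_arc[OF xb xS] chord_le_arc[OF xS y] gx gy r0 by linarith
    finally have nd: "norm (xb - y) < (\<Lambda> + 1) * rb" by (simp add: algebra_simps)
    have "lam * rb \<le> 2" using tb rb0 by (simp add: lam_def field_simps)
    have "lam * norm (xb - y) \<le> lam * ((\<Lambda> + 1) * rb)"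
      using nd lam0 by (intro mult_left_mono) auto
    also have "\<dots> = (\<Lambda> + 1) * (lam * rb)" by simp
    also have "\<dots> \<le> (\<Lambda> + 1) * 2" using \<open>lam * rb \<le> 2\<close> L by (intro mult_left_mono) auto
    finally have lnd: "lam * norm (xb - y) \<le> 2 * (\<Lambda> + 1)" by simp
    have xx: "xb \<bullet> xb = 1" "y \<bullet> y = 1" using nxb ny by (simp_all add: dot_square_norm)
    have "(norm (xb - y))^2 = 2 - 2 * (y \<bullet> xb)"
      by (simp add: power2_norm_eq_inner inner_diff_left inner_diff_right xx inner_commute)
    then have oms: "lam\<^sup>2 * (1 - y \<bullet> xb) = (lam * norm (xb - y))^2 / 2"
      by (simp add: power_mult_distrib)
    have "(lam * norm (xb - y))^2 \<le> (2 * (\<Lambda> + 1))^2"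
      using lnd lam0 by (intro power_mono) auto
    moreover have "(2 * (\<Lambda> + 1))^2 = 4 * (\<Lambda> + 1)\<^sup>2" by (simp add: power2_eq_square algebra_simps)
    ultimately have "lam\<^sup>2 * (1 - y \<bullet> xb) \<le> 2 * (\<Lambda> + 1)\<^sup>2" unfolding oms
      by linarith
    moreover have "1 + y \<bullet> xb \<le> 2" using inner_le1[OF ny nxb] by auto
    ultimately have DK: "Dn xb lam y \<le> K" by (simp add: Dn_def K_def)
    have a0: "a \<ge> 0" using False by simp
    have aC: "a \<le> Cs / r" using cfx(2) by (simp add: a_def)
    define Lb where "Lb = sqrt 2 * lam / Dn xb lam y"
    have Lb0: "Lb > 0" using lam0 Dp by (simp add: Lb_def)
    have rL: "Lb \<le> rho_dil xb rb y" using rho by (simp add: Lb_def)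
    have rp: "0 < rho_dil xb rb y * Lb" using Lb0 rL by (intro mult_pos_pos) auto
    have "a / rho_dil xb rb y \<le> a / Lb" by (rule divide_left_mono[OF rL a0 rp])
    also have "a / Lb = a * Dn xb lam y * tb / sqrt 2"
      using tb Dp by (simp add: Lb_def lam_def field_simps)
    also have "\<dots> \<le> a * Dn xb lam y * tb"
    proof -
      have "0 \<le> a * Dn xb lam y * tb" using a0 Dp tb by simp
      moreover have "1 \<le> sqrt (2::real)" by simp
      ultimately show ?thesis by (simp add: divide_le_eq mult_le_cancel_left1)
    qed
    also have "\<dots> \<le> (Cs / r) * K * rb"
    proof -
      have Cr: "0 \<le> Cs / r" using a0 aC by linarith
      have "a * Dn xb lam y \<le> (Cs / r) * K" using a0 aC Dp DK Cr by (intro mult_mono) auto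
      moreover have "0 \<le> (Cs / r) * K" using Cr K0 by (intro mult_nonneg_nonneg) auto
      ultimately show ?thesis using tb a0 Dp by (intro mult_mono[of "a * Dn xb lam y" _ tb rb]) auto
    qed
    also have "\<dots> \<le> \<bar>Cs\<bar> * K * rb / r"
    proof -
      have "Cs * (K * rb) \<le> \<bar>Cs\<bar> * (K * rb)" using K0 rb0 by (intro mult_right_mono) auto
      then show ?thesis using r0 by (simp add: divide_right_mono mult.assoc)
    qed
    also have "\<dots> \<le> \<bar>Cs\<bar> * K * rb / (d * rb)"
      using K0 rb0 r0 d by (intro divide_left_mono) (auto intro!: mult_pos_pos)
    also have "\<dots> = \<bar>Cs\<bar> * K / d" using rb0 by simp
    finally show ?thesis by (simp add: dnorm_conf_def a_def K_def)
  qed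
qed

theorem lemma3p1:
  fixes phi :: "R3 \<Rightarrow> real \<Rightarrow> R3 \<Rightarrow> real" and Cs :: real
  assumes "cutoff_family phi Cs"
  shows "\<forall>\<Lambda> d. \<Lambda> \<ge> 1 \<and> d > 0 \<longrightarrow>
           (\<exists>C. \<forall>xb\<in>S2. \<forall>rb\<in>{0<..pi/2}. \<forall>x\<in>gball xb (\<Lambda> * rb). \<forall>r\<in>{d * rb<..<rb}.
              \<forall>y\<in>S2. dnorm_conf (rho_dil xb rb) (phi x r) y \<le> C)"
  using main_bound[OF assms] by blast
end
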